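(* Let $q$ be a prime power and $d$ an integer with $5\le d\le q$. Let $\mathcal C$ be the $[q+1,q+2-d,d]_q$ normalized GDRS code and $\mathcal V^{(2)}$ a coset of weight $2$ of $\mathcal C$ with coset leader $\mathbf v_2(j_1,j_2;\gamma_1,\gamma_2)$. Let $\beta$ be a primitive element of $\mathbb F_q$ and let $\lambda(\gamma_1,\gamma_2)\in\mathbb Z_{q-1}$ satisfy $\beta^{\lambda(\gamma_1,\gamma_2)}=-\gamma_2/\gamma_1$. Then the number $B_{d-2}(\mathcal V^{(2)})$ of vectors of weight $d-2$ in $\mathcal V^{(2)}$ does not depend on the positions $j_1,j_2$ and equals $\mathrm P^+_{q-1,d-2}(\lambda(\gamma_1,\gamma_2))$.
   Context: Normalized GDRS code: the $\mathbb F_q$-linear code of length $q+1$ which is the kernel of the $(d-1)\times(q+1)$ matrix whose first $q$ columns are $(1,m,\dots,m^{d-2})^T$, $m$ running over $\mathbb F_q$, and whose last column is $(0,\dots,0,1)^T$. A coset of weight $2$ is a coset $\mathbf v+\mathcal C$ of minimum Hamming weight $2$; a coset leader is a vector of minimum weight in it. $\mathbf v_2(j_1,j_2;\gamma_1,\gamma_2)$ is the vector with $\gamma_1,\gamma_2\in\mathbb F_q^*$ in positions $j_1\ne j_2$ and zeros elsewhere. For positive integers $\mu<R$ and $\lambda\in\mathbb Z_R$, $\mathrm P^+_{R,\mu}(\lambda)$ is the number of $\mu$-element subsets of $\mathbb Z_R$ whose elements sum to $\lambda$ in $\mathbb Z_R$. *)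

theory Defs
  imports Main
begin

text \<open>Positions of a code of length q+1 over the finite field 'a with q = CARD('a):
  position Some m (m in F_q) carries the column (1,m,...,m^(d-2)), position None
  carries the last column (0,...,0,1).\<close>

definition hweight :: "('a option \<Rightarrow> 'a::zero) \<Rightarrow> nat" where
  "hweight v = card {j. v j \<noteq> 0}"

definition GDRS_code :: "nat \<Rightarrow> ('a::{finite,field} option \<Rightarrow> 'a) set" where
  "GDRS_code d = {c. \<forall>i < d - 1.
      (\<Sum>m\<in>UNIV. c (Some m) * m ^ i) + (if i = d - 2 then c None else 0) = 0}"

definition coset :: "('a option \<Rightarrow> 'a::{finite,field}) \<Rightarrow> ('a option \<Rightarrow> 'a) set \<Rightarrow> ('a option \<Rightarrow> 'a) set" where
  "coset v C = {(\<lambda>j. v j + c j) | c. c \<in> C}"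

definition coset_weight :: "('a option \<Rightarrow> 'a::{finite,field}) set \<Rightarrow> nat" where
  "coset_weight V = (LEAST w. \<exists>x\<in>V. hweight x = w)"

definition v2 :: "'a option \<Rightarrow> 'a option \<Rightarrow> 'a \<Rightarrow> 'a \<Rightarrow> ('a option \<Rightarrow> 'a::zero)" where
  "v2 j1 j2 g1 g2 = (\<lambda>j. if j = j1 then g1 else if j = j2 then g2 else 0)"

definition B_count :: "nat \<Rightarrow> ('a option \<Rightarrow> 'a::{finite,field}) set \<Rightarrow> nat" where
  "B_count w V = card {x \<in> V. hweight x = w}"

definition primitive_elem :: "'a::{finite,field} \<Rightarrow> bool" where
  "primitive_elem b \<longleftrightarrow> b \<noteq> 0 \<and> (\<forall>x. x \<noteq> 0 \<longrightarrow> (\<exists>k::nat. b ^ k = x))"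

definition P_plus :: "nat \<Rightarrow> nat \<Rightarrow> nat \<Rightarrow> nat" where
  "P_plus R \<mu> l = card {S. S \<subseteq> {0..<R} \<and> card S = \<mu> \<and> (\<Sum>S) mod R = l mod R}"

end

theory Submission
  imports Defs "HOL-Computational_Algebra.Polynomial"
begin

definition Dp :: "'a::field set \<Rightarrow> 'a \<Rightarrow> 'a" where
  "Dp F m = (\<Prod>m'\<in>F-{m}. (m - m'))"

lemma Dp_nz: "finite F \<Longrightarrow> Dp F m \<noteq> 0"
  unfolding Dp_def by (simp add: prod_zero_iff)

lemma lagrange_coeff:
  fixes F :: "'a::field set" and p :: "'a poly"
  assumes fin: "finite F" and ne: "F \<noteq> {}" and deg: "degree p < card F"
  shows "(\<Sum>m\<in>F. poly p m / Dp F m) = coeff p (card F - 1)"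
proof -
  define P where "P m = (\<Prod>m'\<in>F-{m}. [:-m',1:])" for m
  define L where "L = (\<Sum>m\<in>F. smult (poly p m / Dp F m) (P m))"
  have polyP: "poly (P m) x = (\<Prod>m'\<in>F-{m}. (x - m'))" for m x
    unfolding P_def by (simp add: poly_prod)
  have degP: "degree (P m) = card F - 1" if "m \<in> F" for m
    unfolding P_def using that fin
    by (subst degree_prod_eq_sum_degree) auto
  have lcP: "lead_coeff (P m) = 1" for m
    unfolding P_def by (simp add: lead_coeff_prod)
  have evL: "poly L m0 = poly p m0" if m0: "m0 \<in> F" for m0
  proof -
    have "poly L m0 = (\<Sum>m\<in>F. poly p m / Dp F m * poly (P m) m0)"
      unfolding L_def by (simp add: poly_sum)
    also have "\<dots> = poly p m0 / Dp F m0 * poly (P m0) m0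
        + (\<Sum>m\<in>F-{m0}. poly p m / Dp F m * poly (P m) m0)"
      using fin m0 by (simp add: sum.remove)
    also have "(\<Sum>m\<in>F-{m0}. poly p m / Dp F m * poly (P m) m0) = 0"
    proof (rule sum.neutral, intro ballI)
      fix m assume "m \<in> F - {m0}"
      then have "poly (P m) m0 = 0" using fin m0
        unfolding polyP by (auto simp: prod_zero_iff)
      then show "poly p m / Dp F m * poly (P m) m0 = 0" by simp
    qed
    also have "poly (P m0) m0 = Dp F m0" unfolding polyP Dp_def ..
    finally show ?thesis using Dp_nz[OF fin, of m0] by simp
  qed
  have degL: "degree L \<le> card F - 1"
    unfolding L_def
    by (rule degree_sum_le[OF fin]) (use degP degree_smult_le order_trans in metis)+
  have "p = L"
  proof (rule ccontr)
    assume "p \<noteq> L"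
    then have nz: "p - L \<noteq> 0" by simp
    have "F \<subseteq> {x. poly (p - L) x = 0}" using evL by auto
    then have "card F \<le> card {x. poly (p - L) x = 0}"
      using poly_roots_finite[OF nz] by (rule card_mono[rotated])
    also have "\<dots> \<le> degree (p - L)" by (rule card_poly_roots_bound[OF nz])
    also have "\<dots> \<le> max (degree p) (degree L)" by (rule degree_diff_le_max)
    moreover have "0 < card F" using fin ne by auto
    ultimately show False using deg degL by (auto simp: max_def split: if_splits)
  qed
  have "coeff L (card F - 1) = (\<Sum>m\<in>F. poly p m / Dp F m * coeff (P m) (card F - 1))"
    unfolding L_def by (simp add: coeff_sum)
  then have "coeff p (card F - 1) = (\<Sum>m\<in>F. poly p m / Dp F m * coeff (P m) (card F - 1))"
    using \<open>p = L\<close> by simp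
  also have "\<dots> = (\<Sum>m\<in>F. poly p m / Dp F m)"
  proof (rule sum.cong)
    fix m assume "m \<in> F"
    then have "coeff (P m) (card F - 1) = 1" using degP lcP by metis
    then show "poly p m / Dp F m * coeff (P m) (card F - 1) = poly p m / Dp F m" by simp
  qed simp
  finally show ?thesis by simp
qed

lemma fermat_ff:
  fixes x :: "'a::{finite,field}"
  assumes "x \<noteq> 0"
  shows "x ^ (card (UNIV::'a set) - 1) = 1"
proof -
  let ?N = "UNIV - {0::'a}"
  have inj: "inj_on (\<lambda>y. x * y) ?N" using assms by (auto simp: inj_on_def)
  have img: "(\<lambda>y. x * y) ` ?N = ?N"
  proof
    show "(\<lambda>y. x * y) ` ?N \<subseteq> ?N" using assms by auto
    show "?N \<subseteq> (\<lambda>y. x * y) ` ?N"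
    proof
      fix z assume "z \<in> ?N"
      then have "z = x * (z / x)" "z / x \<in> ?N" using assms by auto
      then show "z \<in> (\<lambda>y. x * y) ` ?N" by blast
    qed
  qed
  have "(\<Prod>y\<in>?N. x * y) = (\<Prod>y\<in>?N. y)"
    using prod.reindex[OF inj, of id] img by simp
  moreover have "(\<Prod>y\<in>?N. x * y) = x ^ card ?N * (\<Prod>y\<in>?N. y)"
    by (simp add: prod.distrib)
  moreover have "(\<Prod>y\<in>?N. y) \<noteq> 0" by simp
  moreover have "card ?N = card (UNIV::'a set) - 1" by (simp add: card_Diff_subset)
  ultimately show ?thesis by simp
qed

lemma card_nonzero: "card (UNIV - {0::'a::{finite,field}}) = card (UNIV::'a set) - 1"
  by (simp add: card_Diff_subset)

lemma prim_pow_mod: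
  fixes b :: "'a::{finite,field}"
  assumes "b \<noteq> 0"
  shows "b ^ k = b ^ (k mod (card (UNIV::'a set) - 1))"
proof -
  have "k = (card (UNIV::'a set) - 1) * (k div (card (UNIV::'a set) - 1)) + k mod (card (UNIV::'a set) - 1)" by simp
  then have "b ^ k = (b ^ (card (UNIV::'a set) - 1)) ^ (k div (card (UNIV::'a set) - 1)) * b ^ (k mod (card (UNIV::'a set) - 1))"
    by (metis power_add power_mult)
  then show ?thesis using fermat_ff[OF assms] by simp
qed

lemma prim_bij:
  fixes b :: "'a::{finite,field}"
  assumes "primitive_elem b" and "2 \<le> card (UNIV::'a set)"
  shows "bij_betw (\<lambda>k. b ^ k) {0..<card (UNIV::'a set) - 1} (UNIV - {0})"
proof -
  have b0: "b \<noteq> 0" using assms unfolding primitive_elem_def by auto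
  have img: "(\<lambda>k. b ^ k) ` {0..<card (UNIV::'a set) - 1} = UNIV - {0}"
  proof
    show "(\<lambda>k. b ^ k) ` {0..<card (UNIV::'a set) - 1} \<subseteq> UNIV - {0}" using b0 by auto
    show "UNIV - {0} \<subseteq> (\<lambda>k. b ^ k) ` {0..<card (UNIV::'a set) - 1}"
    proof
      fix x :: 'a assume "x \<in> UNIV - {0}"
      then obtain k :: nat where "b ^ k = x" using assms unfolding primitive_elem_def by auto
      then have "x = b ^ (k mod (card (UNIV::'a set) - 1))" using prim_pow_mod[OF b0] by simp
      moreover have "k mod (card (UNIV::'a set) - 1) < card (UNIV::'a set) - 1" using assms(2) by simp
      ultimately show "x \<in> (\<lambda>k. b ^ k) ` {0..<card (UNIV::'a set) - 1}" by auto
    qed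
  qed
  have "inj_on (\<lambda>k. b ^ k) {0..<card (UNIV::'a set) - 1}"
  proof (rule eq_card_imp_inj_on)
    have "card ((\<lambda>k. b ^ k) ` {0..<card (UNIV::'a set) - 1}) = card (UNIV::'a set) - 1"
      by (simp only: img card_nonzero)
    then show "card ((\<lambda>k. b ^ k) ` {0..<card (UNIV::'a set) - 1}) = card {0..<card (UNIV::'a set) - 1}"
      by simp
  qed simp
  then show ?thesis using img unfolding bij_betw_def by simp
qed

lemma prim_pow_eq:
  fixes b :: "'a::{finite,field}"
  assumes "primitive_elem b" and "2 \<le> card (UNIV::'a set)"
  shows "b ^ x = b ^ y \<longleftrightarrow> x mod (card (UNIV::'a set) - 1) = y mod (card (UNIV::'a set) - 1)"
proof -
  have b0: "b \<noteq> 0" using assms unfolding primitive_elem_def by auto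
  have inj: "inj_on (\<lambda>k. b ^ k) {0..<card (UNIV::'a set) - 1}"
    using prim_bij[OF assms] bij_betw_def by blast
  have "b ^ x = b ^ y \<longleftrightarrow> b ^ (x mod (card (UNIV::'a set) - 1)) = b ^ (y mod (card (UNIV::'a set) - 1))"
    using prim_pow_mod[OF b0] by metis
  also have "\<dots> \<longleftrightarrow> x mod (card (UNIV::'a set) - 1) = y mod (card (UNIV::'a set) - 1)"
    using inj_onD[OF inj] assms(2) by auto
  finally show ?thesis .
qed

lemma bij_betw_restrict_pred:
  assumes "bij_betw f A B"
  shows "bij_betw f {a\<in>A. P (f a)} {b\<in>B. P b}"
  using assms unfolding bij_betw_def inj_on_def by (auto simp: image_iff)

lemma poly_bound:
  fixes p :: "'a::comm_ring_1 poly"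
  assumes "degree p \<le> n"
  shows "poly p x = (\<Sum>i\<le>n. coeff p i * x ^ i)"
proof -
  have "(\<Sum>i\<le>n. coeff p i * x ^ i) = (\<Sum>i\<le>degree p. coeff p i * x ^ i)"
    by (rule sum.mono_neutral_right) (use assms le_degree in \<open>force+\<close>)
  then show ?thesis by (simp only: poly_altdef[of p x])
qed

definition Lf :: "('a::{finite,field} option \<Rightarrow> 'a) \<Rightarrow> nat \<Rightarrow> 'a poly \<Rightarrow> 'a" where
  "Lf c d p = (\<Sum>m\<in>UNIV. c (Some m) * poly p m) + coeff p (d - 2) * c None"

lemma code_Lf:
  assumes "c \<in> GDRS_code d" "2 \<le> d" "degree p \<le> d - 2"
  shows "Lf c d p = 0"
proof -
  have "Lf c d p = (\<Sum>m\<in>UNIV. c (Some m) * (\<Sum>i\<le>d-2. coeff p i * m ^ i))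
      + (\<Sum>i\<le>d-2. coeff p i * (if i = d - 2 then c None else 0))"
  proof -
    have "(\<Sum>i\<le>d-2. coeff p i * (if i = d - 2 then c None else 0)) = coeff p (d-2) * c None"
      by (simp add: if_distrib[of "\<lambda>z. coeff p _ * z"] cong: if_cong)
    then show ?thesis unfolding Lf_def using assms(3) by (simp add: poly_bound)
  qed
  also have "\<dots> = (\<Sum>i\<le>d-2. coeff p i * ((\<Sum>m\<in>UNIV. c (Some m) * m ^ i) + (if i = d - 2 then c None else 0)))"
    by (simp add: sum_distrib_left sum_distrib_right sum.distrib algebra_simps sum.swap[of _ UNIV])
  also have "\<dots> = 0"
    by (rule sum.neutral) (use assms(1,2) in \<open>auto simp: GDRS_code_def\<close>)
  finally show ?thesis .
qed

lemma Lf_code: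
  assumes "\<And>i. i < d - 1 \<Longrightarrow> Lf c d (monom 1 i) = 0"
  shows "c \<in> GDRS_code d"
  unfolding GDRS_code_def
proof (intro CollectI allI impI)
  fix i assume i: "i < d - 1"
  have "(\<Sum>m\<in>UNIV. c (Some m) * m ^ i) + (if i = d - 2 then 1 else 0) * c None = 0"
    using assms[OF i] unfolding Lf_def by (simp add: poly_monom coeff_monom)
  then show "(\<Sum>m\<in>UNIV. c (Some m) * m ^ i) + (if i = d - 2 then c None else 0) = 0"
    by (cases "i = d - 2") simp_all
qed

lemma card_opt_set:
  fixes S :: "'a::finite option set"
  shows "card S = card {m. Some m \<in> S} + (if None \<in> S then 1 else 0)"
proof -
  have eq: "S = Some ` {m. Some m \<in> S} \<union> (if None \<in> S then {None} else {})"
  proof (rule set_eqI)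
    fix j show "j \<in> S \<longleftrightarrow> j \<in> Some ` {m. Some m \<in> S} \<union> (if None \<in> S then {None} else {})"
      by (cases j) auto
  qed
  have "card S = card (Some ` {m. Some m \<in> S}) + card (if None \<in> S then {None} else {} :: 'a option set)"
    by (subst eq, rule card_Un_disjoint) auto
  then show ?thesis by (simp add: card_image)
qed

lemma supp_card:
  fixes c :: "'a::finite option \<Rightarrow> 'b::zero"
  shows "card {j. c j \<noteq> 0} = card {m. c (Some m) \<noteq> 0} + (if c None \<noteq> 0 then 1 else 0)"
  using card_opt_set[of "{j. c j \<noteq> 0}"] by simp

lemma mds:
  assumes c: "c \<in> GDRS_code d" and d: "2 \<le> d" and w: "card {j. c j \<noteq> 0} < d"
  shows "c j = 0"
proof -
  define F where "F = {m. c (Some m) \<noteq> 0}"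
  have cardF: "card F + (if c None \<noteq> 0 then 1 else 0) < d"
    using w supp_card[of c] unfolding F_def by simp
  have F0: "F = {}"
  proof (rule ccontr)
    assume "F \<noteq> {}"
    then obtain a where a: "a \<in> F" by auto
    define p where "p = (\<Prod>m\<in>F-{a}. [:-m,1:])"
    have degp: "degree p = card F - 1"
      unfolding p_def using a by (subst degree_prod_eq_sum_degree) auto
    have pa: "poly p a \<noteq> 0" unfolding p_def by (simp add: poly_prod)
    have sm: "(\<Sum>m\<in>UNIV. c (Some m) * poly p m) = c (Some a) * poly p a"
    proof -
      have "(\<Sum>m\<in>UNIV. c (Some m) * poly p m) = c (Some a) * poly p a + (\<Sum>m\<in>UNIV-{a}. c (Some m) * poly p m)"
        by (simp add: sum.remove)
      also have "(\<Sum>m\<in>UNIV-{a}. c (Some m) * poly p m) = 0"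
      proof (rule sum.neutral, intro ballI)
        fix m assume m: "m \<in> UNIV - {a}"
        show "c (Some m) * poly p m = 0"
        proof (cases "m \<in> F")
          case True
          then have "poly p m = 0" using m unfolding p_def by (auto simp: poly_prod)
          then show ?thesis by simp
        qed (simp add: F_def)
      qed
      finally show ?thesis by simp
    qed
    have cf: "coeff p (d - 2) * c None = 0"
    proof (cases "c None = 0")
      case False
      then have "degree p < d - 2" using cardF degp a
        by (cases "card F") auto
      then show ?thesis by (simp add: coeff_eq_0)
    qed simp
    have "degree p \<le> d - 2" using cardF degp by auto
    from code_Lf[OF c d this] have "Lf c d p = 0" .
    then have "c (Some a) * poly p a = 0" unfolding Lf_def using sm cf by simp
    then show False using a pa unfolding F_def by simp
  qed
  then have cs: "\<And>m. c (Some m) = 0" unfolding F_def by auto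
  have "d - 2 < d - 1" using d by simp
  then have "(\<Sum>m\<in>UNIV. c (Some m) * m ^ (d-2)) + c None = 0"
    using c unfolding GDRS_code_def by auto
  then have "c None = 0" using cs by simp
  then show ?thesis using cs by (cases j) auto
qed

lemma code_smult:
  assumes "c \<in> GDRS_code d"
  shows "(\<lambda>j. k * c j) \<in> GDRS_code d"
  unfolding GDRS_code_def
proof (intro CollectI allI impI)
  fix i assume i: "i < d - 1"
  have "(\<Sum>m\<in>UNIV. c (Some m) * m ^ i) + (if i = d - 2 then c None else 0) = 0"
    using assms i unfolding GDRS_code_def by auto
  then have "k * ((\<Sum>m\<in>UNIV. c (Some m) * m ^ i) + (if i = d - 2 then c None else 0)) = 0" by simp
  moreover have "(\<Sum>m\<in>UNIV. k * c (Some m) * m ^ i) = k * (\<Sum>m\<in>UNIV. c (Some m) * m ^ i)"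
    by (simp add: sum_distrib_left mult.assoc)
  ultimately show "(\<Sum>m\<in>UNIV. k * c (Some m) * m ^ i) + (if i = d - 2 then k * c None else 0) = 0"
    by (cases "i = d - 2") (simp_all add: distrib_left)
qed

lemma ab_diff_add_aux: "a + x = 0 \<Longrightarrow> b + y = 0 \<Longrightarrow> (a - b) + (x - y) = (0::'a::ab_group_add)"
proof -
  assume "a + x = 0" "b + y = 0"
  moreover have "(a - b) + (x - y) = (a + x) - (b + y)" by (simp add: algebra_simps)
  ultimately show ?thesis by simp
qed

lemma code_diff:
  assumes "c \<in> GDRS_code d" "e \<in> GDRS_code d"
  shows "(\<lambda>j. c j - e j) \<in> GDRS_code d"
  unfolding GDRS_code_def
proof (intro CollectI allI impI)
  fix i assume i: "i < d - 1"
  have h: "(\<Sum>m\<in>UNIV. c (Some m) * m ^ i) + (if i = d - 2 then c None else 0) = 0"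
       "(\<Sum>m\<in>UNIV. e (Some m) * m ^ i) + (if i = d - 2 then e None else 0) = 0"
    using assms i unfolding GDRS_code_def by auto
  have s: "(\<Sum>m\<in>UNIV. (c (Some m) - e (Some m)) * m ^ i) = (\<Sum>m\<in>UNIV. c (Some m) * m ^ i) - (\<Sum>m\<in>UNIV. e (Some m) * m ^ i)"
    by (simp add: left_diff_distrib sum_subtractf)
  show "(\<Sum>m\<in>UNIV. (c (Some m) - e (Some m)) * m ^ i) + (if i = d - 2 then c None - e None else 0) = 0"
  proof (cases "i = d - 2")
    case True
    then have "(\<Sum>m\<in>UNIV. c (Some m) * m ^ i) + c None = 0" "(\<Sum>m\<in>UNIV. e (Some m) * m ^ i) + e None = 0"
      using h by auto
    then show ?thesis using s True by (simp add: ab_diff_add_aux)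
  qed (use h s in simp)
qed

lemma mem_coset: "x \<in> coset v C \<longleftrightarrow> (\<lambda>j. x j - v j) \<in> C"
proof
  assume "x \<in> coset v C"
  then obtain c where "c \<in> C" "x = (\<lambda>j. v j + c j)" unfolding coset_def by auto
  then show "(\<lambda>j. x j - v j) \<in> C" by simp
next
  assume "(\<lambda>j. x j - v j) \<in> C"
  moreover have "x = (\<lambda>j. v j + (\<lambda>j. x j - v j) j)" by simp
  ultimately show "x \<in> coset v C" unfolding coset_def
    by (intro CollectI exI[of _ "\<lambda>j. x j - v j"]) simp
qed

definition cw :: "'a::{finite,field} option set \<Rightarrow> 'a option \<Rightarrow> 'a" where
  "cw S j = (case j of Some m \<Rightarrow> if Some m \<in> S then 1 / Dp {m. Some m \<in> S} m else 0
                     | None \<Rightarrow> if None \<in> S then -1 else 0)"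

lemma cw_nz: "cw S j \<noteq> 0 \<longleftrightarrow> j \<in> S"
  unfolding cw_def using Dp_nz[of "{m. Some m \<in> S}"] by (cases j) auto

lemma cw_code:
  fixes S :: "'a::{finite,field} option set"
  assumes S: "card S = d" and d: "2 \<le> d"
  shows "cw S \<in> GDRS_code d"
proof (rule Lf_code)
  fix i assume i: "i < d - 1"
  define F where "F = {m. Some m \<in> S}"
  have cS: "card S = card F + (if None \<in> S then 1 else 0)"
    unfolding F_def by (rule card_opt_set)
  have Fne: "F \<noteq> {}"
  proof
    assume "F = {}"
    then have "card S \<le> 1" using cS by simp
    then show False using S d by simp
  qed
  have degi: "degree (monom (1::'a) i) < card F" using cS S i by (auto simp: degree_monom_eq split: if_splits)
  have "(\<Sum>m\<in>UNIV. cw S (Some m) * poly (monom 1 i) m) = (\<Sum>m\<in>F. poly (monom 1 i) m / Dp F m)"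
  proof -
    have "(\<Sum>m\<in>UNIV. cw S (Some m) * poly (monom 1 i) m) = (\<Sum>m\<in>UNIV. if m \<in> F then poly (monom 1 i) m / Dp F m else 0)"
      unfolding cw_def F_def by (intro sum.cong) auto
    also have "\<dots> = (\<Sum>m\<in>F. poly (monom 1 i) m / Dp F m)"
      by (simp add: sum.If_cases)
    finally show ?thesis .
  qed
  also have "\<dots> = coeff (monom 1 i) (card F - 1)"
    by (rule lagrange_coeff[OF _ Fne degi]) simp
  finally have sm: "(\<Sum>m\<in>UNIV. cw S (Some m) * poly (monom 1 i) m) = (if card F - 1 = i then 1 else 0)"
    by (simp add: coeff_monom)
  show "Lf (cw S) d (monom 1 i) = 0"
    unfolding Lf_def sm using cS S i by (auto simp: cw_def coeff_monom)
qed

lemma count_T: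
  fixes j1 j2 :: "'a::{finite,field} option" and g1 g2 :: 'a
  assumes d: "5 \<le> d" and j12: "j1 \<noteq> j2" and g1: "g1 \<noteq> 0" and g2: "g2 \<noteq> 0"
  shows "B_count (d - 2) (coset (v2 j1 j2 g1 g2) (GDRS_code d))
    = card {T. T \<subseteq> - {j1, j2} \<and> card T = d - 2 \<and>
              cw (insert j1 (insert j2 T)) j2 / cw (insert j1 (insert j2 T)) j1 = g2 / g1}"
proof -
  define v where "v = v2 j1 j2 g1 g2"
  define C where "C = (GDRS_code d :: ('a option \<Rightarrow> 'a) set)"
  define SS where "SS T = insert j1 (insert j2 T)" for T :: "'a option set"
  define \<kappa> where "\<kappa> T = - g1 / cw (SS T) j1" for T
  define X where "X T = (\<lambda>j. v j + \<kappa> T * cw (SS T) j)" for T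
  define TT where "TT = {T. T \<subseteq> - {j1, j2} \<and> card T = d - 2 \<and> cw (SS T) j2 / cw (SS T) j1 = g2 / g1}"
  have vj1: "v j1 = g1" and vj2: "v j2 = g2" and vo: "\<And>j. j \<noteq> j1 \<Longrightarrow> j \<noteq> j2 \<Longrightarrow> v j = 0"
    unfolding v_def v2_def using j12 by auto
  have hv: "hweight v = 2"
  proof -
    have "{j. v j \<noteq> 0} = {j1, j2}" using vj1 vj2 vo g1 g2 by auto
    then show ?thesis unfolding hweight_def using j12 by simp
  qed
  have cardSS: "card (SS T) = card T + 2" if "T \<subseteq> - {j1, j2}" for T
    using that j12 unfolding SS_def by (auto simp: card_insert_if)
  have d2: "2 \<le> d" using d by simp
  have cwC: "cw (SS T) \<in> C" if "T \<subseteq> - {j1, j2}" "card T = d - 2" for T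
    unfolding C_def using cardSS[OF that(1)] that(2) d by (intro cw_code) auto
  have cw1: "cw (SS T) j1 \<noteq> 0" for T unfolding SS_def cw_nz by simp
  have suppX: "{j. X T j \<noteq> 0} = T" if T: "T \<in> TT" for T
  proof (rule set_eqI)
    fix j
    have Tsub: "T \<subseteq> - {j1, j2}" and rat: "cw (SS T) j2 / cw (SS T) j1 = g2 / g1"
      using T unfolding TT_def by auto
    show "j \<in> {j. X T j \<noteq> 0} \<longleftrightarrow> j \<in> T"
    proof (cases "j = j1")
      case True
      then show ?thesis using Tsub cw1[of T] vj1 unfolding X_def \<kappa>_def by auto
    next
      case False
      note n1 = False
      show ?thesis
      proof (cases "j = j2")
        case True
        have "cw (SS T) j2 = g2 / g1 * cw (SS T) j1" using rat cw1[of T] by (simp add: field_simps)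
        then have "\<kappa> T * cw (SS T) j2 = - g2" unfolding \<kappa>_def using cw1[of T] g1 by (simp add: field_simps)
        then show ?thesis using True Tsub vj2 unfolding X_def by auto
      next
        case False
        then have "X T j = \<kappa> T * cw (SS T) j" using n1 vo unfolding X_def by simp
        moreover have "\<kappa> T \<noteq> 0" unfolding \<kappa>_def using g1 cw1[of T] by simp
        moreover have "cw (SS T) j \<noteq> 0 \<longleftrightarrow> j \<in> T" using n1 False unfolding SS_def cw_nz by simp
        ultimately show ?thesis by simp
      qed
    qed
  qed
  have XV: "X T \<in> coset v C" if T: "T \<in> TT" for T
  proof -
    have "(\<lambda>j. X T j - v j) = (\<lambda>j. \<kappa> T * cw (SS T) j)" unfolding X_def by simp
    moreover have "(\<lambda>j. \<kappa> T * cw (SS T) j) \<in> C"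
      using T cwC[of T] unfolding TT_def C_def by (auto intro: code_smult)
    ultimately show ?thesis unfolding mem_coset by simp
  qed
  have eq: "{x \<in> coset v C. hweight x = d - 2} = X ` TT"
  proof
    show "X ` TT \<subseteq> {x \<in> coset v C. hweight x = d - 2}"
      using XV suppX unfolding hweight_def TT_def by auto
  next
    show "{x \<in> coset v C. hweight x = d - 2} \<subseteq> X ` TT"
    proof
      fix x assume "x \<in> {x \<in> coset v C. hweight x = d - 2}"
      then have xV: "x \<in> coset v C" and hx: "hweight x = d - 2" by auto
      define c where "c = (\<lambda>j. x j - v j)"
      define T where "T = {j. x j \<noteq> 0}"
      have cC: "c \<in> C" using xV unfolding c_def mem_coset .
      have cT: "card T = d - 2" using hx unfolding T_def hweight_def .
      have "x \<noteq> v" using hx hv d by auto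
      then obtain j0 where j0: "c j0 \<noteq> 0" unfolding c_def by auto
      have suppc: "{j. c j \<noteq> 0} \<subseteq> T \<union> {j1, j2}" unfolding c_def T_def using vo by auto
      have Tsub: "T \<subseteq> - {j1, j2}"
      proof (rule ccontr)
        assume "\<not> T \<subseteq> - {j1, j2}"
        then have "j1 \<in> T \<or> j2 \<in> T" by auto
        then have "card (T \<union> {j1, j2}) \<le> card T + 1"
          by (auto simp: insert_absorb card_insert_if insert_commute)
        then have "card {j. c j \<noteq> 0} < d"
          using card_mono[OF _ suppc] cT d by simp
        then have "c j0 = 0" using mds[of c d j0] cC d unfolding C_def by simp
        then show False using j0 by simp
      qed
      have x1: "x j1 = 0" "x j2 = 0" using Tsub unfolding T_def by auto
      have suppc2: "c j \<noteq> 0 \<longleftrightarrow> j \<in> SS T" for j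
      proof (cases "j = j1 \<or> j = j2")
        case True
        then show ?thesis using x1 vj1 vj2 g1 g2 unfolding c_def SS_def by auto
      next
        case False
        then show ?thesis using vo[of j] unfolding c_def SS_def T_def by auto
      qed
      have c1: "c j1 = - g1" and c2: "c j2 = - g2"
        using Tsub vj1 vj2 unfolding c_def T_def by auto
      define e where "e = (\<lambda>j. c j - \<kappa> T * cw (SS T) j)"
      have eC: "e \<in> C" unfolding e_def
        using cC cwC[OF Tsub cT] unfolding C_def by (auto intro: code_diff code_smult)
      have e1: "e j1 = 0" unfolding e_def \<kappa>_def c1 using cw1[of T] by simp
      have suppe: "{j. e j \<noteq> 0} \<subseteq> SS T - {j1}"
      proof
        fix j assume j: "j \<in> {j. e j \<noteq> 0}"
        then have "j \<noteq> j1" using e1 by auto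
        moreover have "j \<in> SS T"
        proof (rule ccontr)
          assume "j \<notin> SS T"
          then have "c j = 0" "cw (SS T) j = 0" using suppc2[of j] cw_nz[of "SS T" j] by auto
          then show False using j unfolding e_def by simp
        qed
        ultimately show "j \<in> SS T - {j1}" by simp
      qed
      have "card (SS T - {j1}) = d - 1"
      proof -
        have "j1 \<in> SS T" unfolding SS_def by simp
        then have "card (SS T - {j1}) = card (SS T) - 1" by (simp add: card_Diff_singleton)
        then show ?thesis using cardSS[OF Tsub] cT d by simp
      qed
      then have "card {j. e j \<noteq> 0} < d" using card_mono[OF _ suppe] d by simp
      then have e0: "e j = 0" for j using mds[of e d j] eC d unfolding C_def by simp
      then have ck: "c j = \<kappa> T * cw (SS T) j" for j unfolding e_def by (metis eq_iff_diff_eq_0)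
      have "x = X T" unfolding X_def
      proof
        fix j show "x j = v j + \<kappa> T * cw (SS T) j" using ck[of j] unfolding c_def by (simp add: algebra_simps)
      qed
      moreover have "cw (SS T) j2 / cw (SS T) j1 = g2 / g1"
      proof -
        have "- g2 = - g1 / cw (SS T) j1 * cw (SS T) j2" using ck[of j2] c2 unfolding \<kappa>_def by simp
        then show ?thesis using cw1[of T] g1 by (simp add: field_simps)
      qed
      ultimately show "x \<in> X ` TT" unfolding TT_def using Tsub cT by auto
    qed
  qed
  have inj: "inj_on X TT"
  proof (rule inj_onI)
    fix T T' assume "T \<in> TT" "T' \<in> TT" "X T = X T'"
    then show "T = T'" using suppX by metis
  qed
  have "B_count (d - 2) (coset v C) = card TT"
    unfolding B_count_def eq using card_image[OF inj] .
  then show ?thesis unfolding v_def C_def TT_def SS_def .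
qed

lemma card_restrict_bij:
  assumes "bij_betw f A B"
  shows "card {a\<in>A. P (f a)} = card {b\<in>B. P b}"
  using bij_betw_same_card[OF bij_betw_restrict_pred[OF assms]] .

lemma final_count:
  fixes \<phi> :: "'b \<Rightarrow> 'a::{finite,field}" and \<beta> :: 'a
  assumes bij: "bij_betw \<phi> D (UNIV - {0})"
    and ratio: "\<And>T. T \<subseteq> D \<Longrightarrow> card T = k \<Longrightarrow> r T = - (\<Prod>t\<in>T. \<phi> t)"
    and prim: "primitive_elem \<beta>" and q2: "2 \<le> card (UNIV::'a set)"
    and bl: "\<beta> ^ l = - g2 / g1"
  shows "card {T. T \<subseteq> D \<and> card T = k \<and> r T = g2 / g1} = P_plus (card (UNIV::'a set) - 1) k l"
proof -
  define Q where "Q U = (card U = k \<and> \<Prod>U = \<beta> ^ l)" for U :: "'a set"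
  have inj: "inj_on \<phi> D" using bij bij_betw_def by blast
  have s1: "{T. T \<subseteq> D \<and> card T = k \<and> r T = g2 / g1} = {T \<in> Pow D. Q (\<phi> ` T)}"
  proof (rule set_eqI)
    fix T
    show "T \<in> {T. T \<subseteq> D \<and> card T = k \<and> r T = g2 / g1} \<longleftrightarrow> T \<in> {T \<in> Pow D. Q (\<phi> ` T)}"
    proof (cases "T \<subseteq> D")
      case True
      have injT: "inj_on \<phi> T" using inj True inj_on_subset by blast
      have c: "card (\<phi> ` T) = card T" using card_image[OF injT] .
      have p: "\<Prod>(\<phi> ` T) = (\<Prod>t\<in>T. \<phi> t)" using prod.reindex[OF injT, of id] by simp
      have "r T = g2 / g1 \<longleftrightarrow> (\<Prod>t\<in>T. \<phi> t) = \<beta> ^ l" if "card T = k"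
      proof -
        have "r T = - (\<Prod>t\<in>T. \<phi> t)" using ratio[OF True that] .
        moreover have "(- P = g2 / g1) \<longleftrightarrow> (P = - (g2 / g1))" for P :: 'a by (metis minus_minus)
        ultimately show ?thesis using bl by simp
      qed
      then show ?thesis using True c p unfolding Q_def by auto
    qed auto
  qed
  have bijP: "bij_betw (image \<phi>) (Pow D) (Pow (UNIV - {0}))" by (rule bij_betw_image_Pow[OF bij])
  have s2: "card {T \<in> Pow D. Q (\<phi> ` T)} = card {U \<in> Pow (UNIV - {0}). Q U}"
    by (rule card_restrict_bij[OF bijP])
  define N where "N = card (UNIV::'a set) - 1"
  have bijB: "bij_betw (\<lambda>n. \<beta> ^ n) {0..<N} (UNIV - {0})" unfolding N_def by (rule prim_bij[OF prim q2])
  have bijBP: "bij_betw (image (\<lambda>n. \<beta> ^ n)) (Pow {0..<N}) (Pow (UNIV - {0}))" by (rule bij_betw_image_Pow[OF bijB])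
  have s3: "card {S \<in> Pow {0..<N}. Q ((\<lambda>n. \<beta> ^ n) ` S)} = card {U \<in> Pow (UNIV - {0}). Q U}"
    by (rule card_restrict_bij[OF bijBP])
  have injB: "inj_on (\<lambda>n. \<beta> ^ n) {0..<N}" using bijB bij_betw_def by blast
  have s4: "{S \<in> Pow {0..<N}. Q ((\<lambda>n. \<beta> ^ n) ` S)} = {S. S \<subseteq> {0..<N} \<and> card S = k \<and> (\<Sum>S) mod N = l mod N}"
  proof (rule set_eqI)
    fix S
    show "S \<in> {S \<in> Pow {0..<N}. Q ((\<lambda>n. \<beta> ^ n) ` S)} \<longleftrightarrow> S \<in> {S. S \<subseteq> {0..<N} \<and> card S = k \<and> (\<Sum>S) mod N = l mod N}"
    proof (cases "S \<subseteq> {0..<N}")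
      case True
      have injS: "inj_on (\<lambda>n. \<beta> ^ n) S" using injB True inj_on_subset by blast
      have c: "card ((\<lambda>n. \<beta> ^ n) ` S) = card S" using card_image[OF injS] .
      have p: "\<Prod>((\<lambda>n. \<beta> ^ n) ` S) = \<beta> ^ (\<Sum>S)"
        using prod.reindex[OF injS, of id] by (simp add: power_sum)
      have "\<beta> ^ (\<Sum>S) = \<beta> ^ l \<longleftrightarrow> (\<Sum>S) mod N = l mod N"
        unfolding N_def by (rule prim_pow_eq[OF prim q2])
      then show ?thesis using True c p unfolding Q_def by auto
    qed auto
  qed
  have pp: "P_plus (card (UNIV::'a set) - 1) k l = card {S. S \<subseteq> {0..<N} \<and> card S = k \<and> (\<Sum>S) mod N = l mod N}"
    unfolding P_plus_def N_def ..
  show ?thesis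
    by (simp only: s1 s2 s3[symmetric] s4 pp)
qed

lemma prod_opt:
  fixes T :: "'a::finite option set" and \<phi> :: "'a option \<Rightarrow> 'b::comm_monoid_mult"
  assumes "\<phi> None = 1"
  shows "(\<Prod>t\<in>T. \<phi> t) = (\<Prod>m\<in>{m. Some m \<in> T}. \<phi> (Some m))"
proof -
  have "(\<Prod>t\<in>T. \<phi> t) = (\<Prod>t\<in>Some ` {m. Some m \<in> T}. \<phi> t)"
  proof (rule prod.mono_neutral_right)
    show "\<forall>i\<in>T - Some ` {m. Some m \<in> T}. \<phi> i = 1"
    proof
      fix i assume "i \<in> T - Some ` {m. Some m \<in> T}"
      then have "i = None" by (cases i) auto
      then show "\<phi> i = 1" using assms by simp
    qed
  qed auto
  also have "\<dots> = (\<Prod>m\<in>{m. Some m \<in> T}. \<phi> (Some m))"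
    by (simp add: prod.reindex)
  finally show ?thesis .
qed

lemma Dp_ins2:
  assumes "a \<noteq> b" "a \<notin> A" "b \<notin> A" "finite A"
  shows "Dp (insert a (insert b A)) a = (a - b) * (\<Prod>m\<in>A. (a - m))"
proof -
  have "insert a (insert b A) - {a} = insert b A" using assms by auto
  then show ?thesis unfolding Dp_def using assms by simp
qed

lemma bij_from_inj:
  assumes "finite B" "inj_on f A" "f ` A \<subseteq> B" "card A = card B"
  shows "bij_betw f A B"
proof -
  have "card (f ` A) = card B" using card_image[OF assms(2)] assms(4) by simp
  then have "f ` A = B" using card_subset_eq[OF assms(1,3)] by simp
  then show ?thesis using assms(2) unfolding bij_betw_def by simp
qed

lemma card_D:
  fixes j1 j2 :: "'a::finite option"
  assumes "j1 \<noteq> j2"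
  shows "card (- {j1, j2}) = card (UNIV::'a set) - 1"
proof -
  have "card (UNIV :: 'a option set) = card (UNIV::'a set) + 1"
    using card_opt_set[of "UNIV :: 'a option set"] by simp
  moreover have "card (- {j1, j2}) = card (UNIV :: 'a option set) - 2"
    using assms by (simp add: Compl_eq_Diff_UNIV card_Diff_subset)
  ultimately show ?thesis by simp
qed

lemma frac_inj:
  fixes a b t s :: "'a::field"
  assumes "a \<noteq> b" "t \<noteq> b" "s \<noteq> b" "(a - t) / (b - t) = (a - s) / (b - s)"
  shows "t = s"
proof -
  have "(a - t) * (b - s) = (a - s) * (b - t)" using assms by (simp add: field_simps)
  then have "(a - b) * (t - s) = 0" by algebra
  then show ?thesis using assms(1) by simp
qed

lemma phi_exists:
  fixes j1 j2 :: "'a::{finite,field} option"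
  assumes j12: "j1 \<noteq> j2"
  shows "\<exists>\<phi>. bij_betw \<phi> (- {j1, j2}) (UNIV - {0}) \<and>
    (\<forall>T. T \<subseteq> - {j1, j2} \<longrightarrow>
      cw (insert j1 (insert j2 T)) j2 / cw (insert j1 (insert j2 T)) j1 = - (\<Prod>t\<in>T. \<phi> t))"
proof (cases j1)
  case None
  then obtain b where j2: "j2 = Some b" using j12 by (cases j2) auto
  define \<phi> where "\<phi> j = (case j of None \<Rightarrow> 1 | Some t \<Rightarrow> 1 / (b - t))" for j
  have bij: "bij_betw \<phi> (- {j1, j2}) (UNIV - {0})"
  proof (rule bij_from_inj)
    show "inj_on \<phi> (- {j1, j2})"
    proof (rule inj_onI)
      fix x y assume "x \<in> - {j1, j2}" "y \<in> - {j1, j2}" "\<phi> x = \<phi> y"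
      then show "x = y" using None j2 unfolding \<phi>_def by (cases x; cases y) auto
    qed
    show "\<phi> ` (- {j1, j2}) \<subseteq> UNIV - {0}" using None j2 unfolding \<phi>_def by (auto split: option.splits)
  qed (use card_D[OF j12] card_nonzero in auto)
  moreover have "cw (insert j1 (insert j2 T)) j2 / cw (insert j1 (insert j2 T)) j1 = - (\<Prod>t\<in>T. \<phi> t)"
    if T: "T \<subseteq> - {j1, j2}" for T
  proof -
    define Tf where "Tf = {m. Some m \<in> T}"
    have bT: "b \<notin> Tf" using T j2 unfolding Tf_def by auto
    have F: "{m. Some m \<in> insert j1 (insert j2 T)} = insert b Tf" using None j2 unfolding Tf_def by auto
    have "cw (insert j1 (insert j2 T)) j2 = 1 / Dp (insert b Tf) b" using j2 F unfolding cw_def by simp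
    moreover have "cw (insert j1 (insert j2 T)) j1 = -1" using None unfolding cw_def by simp
    moreover have "Dp (insert b Tf) b = (\<Prod>m\<in>Tf. (b - m))"
    proof -
      have "insert b Tf - {b} = Tf" using bT by auto
      then show ?thesis unfolding Dp_def by simp
    qed
    moreover have "(\<Prod>t\<in>T. \<phi> t) = (\<Prod>m\<in>Tf. 1 / (b - m))"
      unfolding Tf_def by (subst prod_opt) (simp_all add: \<phi>_def)
    ultimately show ?thesis by (simp add: prod_dividef)
  qed
  ultimately show ?thesis by blast
next
  case (Some a)
  note j1 = Some
  show ?thesis
  proof (cases j2)
    case None
    define \<phi> where "\<phi> j = (case j of None \<Rightarrow> 1 | Some t \<Rightarrow> a - t)" for j
    have bij: "bij_betw \<phi> (- {j1, j2}) (UNIV - {0})"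
    proof (rule bij_from_inj)
      show "inj_on \<phi> (- {j1, j2})"
      proof (rule inj_onI)
        fix x y assume "x \<in> - {j1, j2}" "y \<in> - {j1, j2}" "\<phi> x = \<phi> y"
        then show "x = y" using None j1 unfolding \<phi>_def by (cases x; cases y) auto
      qed
      show "\<phi> ` (- {j1, j2}) \<subseteq> UNIV - {0}" using None j1 unfolding \<phi>_def by (auto split: option.splits)
    qed (use card_D[OF j12] card_nonzero in auto)
    moreover have "cw (insert j1 (insert j2 T)) j2 / cw (insert j1 (insert j2 T)) j1 = - (\<Prod>t\<in>T. \<phi> t)"
      if T: "T \<subseteq> - {j1, j2}" for T
    proof -
      define Tf where "Tf = {m. Some m \<in> T}"
      have aT: "a \<notin> Tf" using T j1 unfolding Tf_def by auto
      have F: "{m. Some m \<in> insert j1 (insert j2 T)} = insert a Tf" using None j1 unfolding Tf_def by auto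
      have "cw (insert j1 (insert j2 T)) j1 = 1 / Dp (insert a Tf) a" using j1 F unfolding cw_def by simp
      moreover have "cw (insert j1 (insert j2 T)) j2 = -1" using None unfolding cw_def by simp
      moreover have "Dp (insert a Tf) a = (\<Prod>m\<in>Tf. (a - m))"
      proof -
        have "insert a Tf - {a} = Tf" using aT by auto
        then show ?thesis unfolding Dp_def by simp
      qed
      moreover have "(\<Prod>t\<in>T. \<phi> t) = (\<Prod>m\<in>Tf. (a - m))"
        unfolding Tf_def by (subst prod_opt) (simp_all add: \<phi>_def)
      ultimately show ?thesis by simp
    qed
    ultimately show ?thesis by blast
  next
    case (Some b)
    note j2 = Some
    have ab: "a \<noteq> b" using j12 j1 j2 by simp
    define \<phi> where "\<phi> j = (case j of None \<Rightarrow> 1 | Some t \<Rightarrow> (a - t) / (b - t))" for j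
    have bij: "bij_betw \<phi> (- {j1, j2}) (UNIV - {0})"
    proof (rule bij_from_inj)
      show "inj_on \<phi> (- {j1, j2})"
      proof (rule inj_onI)
        fix x y assume xy: "x \<in> - {j1, j2}" "y \<in> - {j1, j2}" "\<phi> x = \<phi> y"
        show "x = y"
        proof (cases x; cases y)
          fix t s assume "x = Some t" "y = Some s"
          then show "x = y" using xy j1 j2 frac_inj[OF ab, of t s] unfolding \<phi>_def by auto
        next
          fix t assume "x = None" "y = Some t"
          then show "x = y" using xy j1 j2 ab unfolding \<phi>_def by (auto simp: field_simps)
        next
          fix t assume "x = Some t" "y = None"
          then show "x = y" using xy j1 j2 ab unfolding \<phi>_def by (auto simp: field_simps)
        qed simp
      qed
      show "\<phi> ` (- {j1, j2}) \<subseteq> UNIV - {0}" using j1 j2 unfolding \<phi>_def by (auto split: option.splits)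
    qed (use card_D[OF j12] card_nonzero in auto)
    moreover have "cw (insert j1 (insert j2 T)) j2 / cw (insert j1 (insert j2 T)) j1 = - (\<Prod>t\<in>T. \<phi> t)"
      if T: "T \<subseteq> - {j1, j2}" for T
    proof -
      define Tf where "Tf = {m. Some m \<in> T}"
      have aT: "a \<notin> Tf" "b \<notin> Tf" using T j1 j2 unfolding Tf_def by auto
      have F: "{m. Some m \<in> insert j1 (insert j2 T)} = insert a (insert b Tf)" using j1 j2 unfolding Tf_def by auto
      define A where "A = (\<Prod>m\<in>Tf. (a - m))"
      define B where "B = (\<Prod>m\<in>Tf. (b - m))"
      have c1: "cw (insert j1 (insert j2 T)) j1 = 1 / Dp (insert a (insert b Tf)) a" using j1 F unfolding cw_def by simp
      have c2: "cw (insert j1 (insert j2 T)) j2 = 1 / Dp (insert b (insert a Tf)) b"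
        using j2 F unfolding cw_def by (simp add: insert_commute)
      have d1: "Dp (insert a (insert b Tf)) a = (a - b) * A"
        unfolding A_def by (rule Dp_ins2) (use ab aT in auto)
      have d2: "Dp (insert b (insert a Tf)) b = (b - a) * B"
        unfolding B_def by (rule Dp_ins2) (use ab aT in auto)
      have p: "(\<Prod>t\<in>T. \<phi> t) = A / B"
        unfolding Tf_def A_def B_def by (subst prod_opt) (simp_all add: \<phi>_def prod_dividef Tf_def[symmetric])
      have B0: "B \<noteq> 0" using aT unfolding B_def by auto
      have A0: "A \<noteq> 0" using aT unfolding A_def by auto
      have ab0: "a - b \<noteq> 0" "b - a \<noteq> 0" using ab by auto
      have "(1 / ((b - a) * B)) / (1 / ((a - b) * A)) = - (A / B)"
        using A0 B0 ab0 by (simp add: field_simps)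
      then show ?thesis unfolding c1 c2 d1 d2 p .
    qed
    ultimately show ?thesis by blast
  qed
qed

theorem corollary3p7:
  fixes d :: nat and j1 j2 :: "'a::{finite,field} option"
    and g1 g2 \<beta> :: 'a and l :: nat
  assumes "5 \<le> d" and "d \<le> card (UNIV :: 'a set)"
    and "j1 \<noteq> j2" and "g1 \<noteq> 0" and "g2 \<noteq> 0"
    and "coset_weight (coset (v2 j1 j2 g1 g2) (GDRS_code d)) = 2"
    and "primitive_elem \<beta>"
    and "\<beta> ^ l = - g2 / g1"
  shows "B_count (d - 2) (coset (v2 j1 j2 g1 g2) (GDRS_code d))
           = P_plus (card (UNIV :: 'a set) - 1) (d - 2) l"
proof -
  obtain \<phi> where bij: "bij_betw \<phi> (- {j1, j2}) (UNIV - {0})"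
    and rat: "\<And>T. T \<subseteq> - {j1, j2} \<Longrightarrow>
      cw (insert j1 (insert j2 T)) j2 / cw (insert j1 (insert j2 T)) j1 = - (\<Prod>t\<in>T. \<phi> t)"
    using phi_exists[OF assms(3)] by blast
  have q2: "2 \<le> card (UNIV :: 'a set)" using assms(1,2) by simp
  have bl: "\<beta> ^ l = - (g2 / g1)" using assms(8) by simp
  have rat': "\<And>T. T \<subseteq> - {j1, j2} \<Longrightarrow> card T = d - 2 \<Longrightarrow>
      (\<lambda>T. cw (insert j1 (insert j2 T)) j2 / cw (insert j1 (insert j2 T)) j1) T = - (\<Prod>t\<in>T. \<phi> t)"
    using rat by simp
  show ?thesis
    unfolding count_T[OF assms(1,3,4,5)]
    using final_count[where r = "\<lambda>T. cw (insert j1 (insert j2 T)) j2 / cw (insert j1 (insert j2 T)) j1",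
        OF bij rat' assms(7) q2 assms(8)] by simp
qed

end
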